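(* Let $d_0$ and $d_1$ be metrics on $\omega$. The following are equivalent: (1) the completions of $\langle\omega,d_0\rangle$ and $\langle\omega,d_1\rangle$ are isometrically isomorphic Polish metric spaces; (2) there is a metric $d^*$ on $\omega$ and, for each $e\in\{0,1\}$, a dense isometry $\iota_e:\langle\omega,d_e\rangle\to\langle\omega,d^*\rangle$.
   Context: An isometry is a distance-preserving map (not necessarily onto); an isometrical isomorphism is an onto isometry; a dense isometry is an isometry with dense image. A completion of a metric space $\langle X,d\rangle$ is a complete metric space $\langle X^*,d^*\rangle$ together with a dense isometry $\langle X,d\rangle\to\langle X^*,d^*\rangle$. *)

theory Defs
  imports "HOL-Analysis.Analysis"
begin

definition isometry_map :: "'a set \<Rightarrow> ('a \<Rightarrow> 'a \<Rightarrow> real) \<Rightarrow> 'b set \<Rightarrow> ('b \<Rightarrow> 'b \<Rightarrow> real) \<Rightarrow> ('a \<Rightarrow> 'b) \<Rightarrow> bool" where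
  "isometry_map M d M' d' f \<longleftrightarrow>
     f ` M \<subseteq> M' \<and> (\<forall>x\<in>M. \<forall>y\<in>M. d' (f x) (f y) = d x y)"

definition isometric_iso :: "'a set \<Rightarrow> ('a \<Rightarrow> 'a \<Rightarrow> real) \<Rightarrow> 'b set \<Rightarrow> ('b \<Rightarrow> 'b \<Rightarrow> real) \<Rightarrow> ('a \<Rightarrow> 'b) \<Rightarrow> bool" where
  "isometric_iso M d M' d' f \<longleftrightarrow> isometry_map M d M' d' f \<and> f ` M = M'"

definition dense_isometry :: "'a set \<Rightarrow> ('a \<Rightarrow> 'a \<Rightarrow> real) \<Rightarrow> 'b set \<Rightarrow> ('b \<Rightarrow> 'b \<Rightarrow> real) \<Rightarrow> ('a \<Rightarrow> 'b) \<Rightarrow> bool" where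
  "dense_isometry M d M' d' f \<longleftrightarrow>
     isometry_map M d M' d' f \<and> Metric_space.mtopology M' d' closure_of (f ` M) = M'"

definition is_completion :: "'a set \<Rightarrow> ('a \<Rightarrow> 'a \<Rightarrow> real) \<Rightarrow> 'b set \<Rightarrow> ('b \<Rightarrow> 'b \<Rightarrow> real) \<Rightarrow> ('a \<Rightarrow> 'b) \<Rightarrow> bool" where
  "is_completion M d X dX iota \<longleftrightarrow>
     Metric_space X dX \<and> Metric_space.mcomplete X dX \<and> dense_isometry M d X dX iota"

definition Polish_metric_space :: "'a set \<Rightarrow> ('a \<Rightarrow> 'a \<Rightarrow> real) \<Rightarrow> bool" where
  "Polish_metric_space X dX \<longleftrightarrow>
     Metric_space X dX \<and> Metric_space.mcomplete X dX \<and> separable_space (Metric_space.mtopology X dX)"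

end

theory Submission imports Defs begin

lemma dense_char:
  assumes M: "Metric_space M d" and S: "S \<subseteq> M"
  shows "Metric_space.mtopology M d closure_of S = M \<longleftrightarrow> (\<forall>x\<in>M. \<forall>r>0. \<exists>y\<in>S. d x y < r)"
proof -
  interpret Metric_space M d by (rule M)
  have A: "(\<lambda>x. \<forall>r>0. \<exists>y\<in>S. y \<in> mball x r) = (\<lambda>x. x \<in> M \<and> (\<forall>r>0. \<exists>y\<in>S. d x y < r))"
    using S by (auto intro!: ext; meson subsetD zero_less_one)
  show ?thesis unfolding metric_closure_of using A
    by (smt (verit, ccfv_threshold) mem_Collect_eq set_eq_iff in_mball)
qed

lemma ext_isometry:
  assumes M: "Metric_space M d" and Y: "Metric_space Y e" and c: "Metric_space.mcomplete Y e"
    and S: "S \<subseteq> M" and hS: "h ` S \<subseteq> Y" and iso: "\<forall>x\<in>S. \<forall>y\<in>S. e (h x) (h y) = d x y"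
    and dense: "Metric_space.mtopology M d closure_of S = M"
  obtains g where "g ` M \<subseteq> Y" "\<forall>x\<in>M. \<forall>y\<in>M. e (g x) (g y) = d x y" "\<forall>x\<in>S. g x = h x"
proof -
  interpret M: Metric_space M d by (rule M)
  interpret Y: Metric_space Y e by (rule Y)
  have L: "Lipschitz_continuous_map (submetric (metric(M,d)) S) (metric(Y,e)) h"
    unfolding Lipschitz_continuous_map_def using S hS iso
    by (auto intro!: exI[of _ 1])
  obtain g where g: "Lipschitz_continuous_map (submetric (metric(M,d)) (mtopology_of (metric(M,d)) closure_of S)) (metric(Y,e)) g"
     "\<And>x. x\<in>S \<Longrightarrow> g x = h x"
    using Lipschitz_continuous_map_extends_to_closure_of[OF _ L] c by auto
  have g2: "Lipschitz_continuous_map (metric(M,d)) (metric(Y,e)) g"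
    using g(1) dense by (metis M.mspace_metric M.mtopology_of submetric_mspace)
  then obtain B where gY: "g ` M \<subseteq> Y" and B: "\<forall>x\<in>M. \<forall>y\<in>M. e (g x) (g y) \<le> B * d x y"
    unfolding Lipschitz_continuous_map_def by auto
  define B' where "B' = \<bar>B\<bar> + 1"
  have B'pos: "B' \<ge> 1" unfolding B'_def by simp
  have Bl: "e (g x) (g y) \<le> B' * d x y" if "x \<in> M" "y \<in> M" for x y
  proof -
    have "B * d x y \<le> B' * d x y" unfolding B'_def by (intro mult_right_mono) auto
    then show ?thesis using B that by force
  qed
  have close: "\<bar>e (g x) (g y) - d x y\<bar> < \<epsilon>" if x: "x \<in> M" and y: "y \<in> M" and \<epsilon>: "\<epsilon> > 0" for x y \<epsilon>
  proof -
    define r where "r = \<epsilon> / (4 * B')"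
    have r: "r > 0" using \<epsilon> B'pos by (simp add: r_def)
    have Br: "B' * r = \<epsilon> / 4" using B'pos by (simp add: r_def)
    have rle: "r \<le> \<epsilon> / 4" unfolding r_def using B'pos \<epsilon>
      by (simp add: field_simps)
    obtain s where s: "s \<in> S" "d x s < r" using dense x r S unfolding dense_char[OF M S] by blast
    obtain t where t: "t \<in> S" "d y t < r" using dense y r S unfolding dense_char[OF M S] by blast
    have sM: "s \<in> M" "t \<in> M" using s t S by auto
    have es: "e (g x) (g s) \<le> \<epsilon>/4"
      using Bl[OF x sM(1)] mult_left_mono[of "d x s" r B'] s B'pos Br by linarith
    have et: "e (g y) (g t) \<le> \<epsilon>/4"
      using Bl[OF y sM(2)] mult_left_mono[of "d y t" r B'] t B'pos Br by linarith
    have est: "e (g s) (g t) = d s t" using iso s t g(2) by auto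
    have gM: "g x \<in> Y" "g y \<in> Y" "g s \<in> Y" "g t \<in> Y" using gY x y sM by auto
    have t1: "e (g x) (g y) \<le> e (g x) (g s) + e (g s) (g t) + e (g t) (g y)"
      using Y.triangle gM by (smt (verit))
    have t2: "e (g s) (g t) \<le> e (g s) (g x) + e (g x) (g y) + e (g y) (g t)"
      using Y.triangle gM by (smt (verit))
    have t3: "d s t \<le> d s x + d x y + d y t" using M.triangle x y sM by (smt (verit))
    have t4: "d x y \<le> d x s + d s t + d t y" using M.triangle x y sM by (smt (verit))
    show ?thesis using t1 t2 t3 t4 es et est s t rle M.commute[of x s] M.commute[of y t]
      Y.commute[of "g x" "g s"] Y.commute[of "g y" "g t"] by (simp add: abs_less_iff)
  qed
  have "e (g x) (g y) = d x y" if "x \<in> M" "y \<in> M" for x y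
  proof (rule ccontr)
    assume "e (g x) (g y) \<noteq> d x y"
    then have "\<bar>e (g x) (g y) - d x y\<bar> > 0" by simp
    from close[OF that this] show False by simp
  qed
  then show thesis using that gY g(2) by blast
qed

lemma isometry_surj:
  assumes M: "Metric_space M d" and Mc: "Metric_space.mcomplete M d" and Y: "Metric_space Y e"
    and fM: "f ` M \<subseteq> Y" and iso: "\<forall>x\<in>M. \<forall>y\<in>M. e (f x) (f y) = d x y"
    and y: "y \<in> Y" and app: "\<forall>r>0. \<exists>x\<in>M. e y (f x) < r"
  shows "y \<in> f ` M"
proof -
  interpret M: Metric_space M d by (rule M)
  interpret Y: Metric_space Y e by (rule Y)
  have "\<forall>k. \<exists>x\<in>M. e y (f x) < 1 / Suc k" using app by simp
  then obtain \<sigma> where \<sigma>: "\<And>k. \<sigma> k \<in> M" "\<And>k. e y (f (\<sigma> k)) < 1 / Suc k" by metis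
  have fs: "\<And>k. f (\<sigma> k) \<in> Y" using \<sigma> fM by auto
  have inv: "1 / real (Suc n) \<le> 1 / Suc N" if "N \<le> n" for n N
    using that by (simp add: frac_le)
  have "M.MCauchy \<sigma>"
    unfolding M.MCauchy_def
  proof (intro conjI allI impI)
    show "range \<sigma> \<subseteq> M" using \<sigma> by auto
    fix \<epsilon> :: real assume "\<epsilon> > 0"
    then obtain N where N: "inverse (real (Suc N)) < \<epsilon>/2"
      using reals_Archimedean[of "\<epsilon>/2"] by auto
    show "\<exists>N. \<forall>n n'. N \<le> n \<longrightarrow> N \<le> n' \<longrightarrow> d (\<sigma> n) (\<sigma> n') < \<epsilon>"
    proof (intro exI allI impI)
      fix n n' assume "N \<le> n" "N \<le> n'"
      have "d (\<sigma> n) (\<sigma> n') = e (f (\<sigma> n)) (f (\<sigma> n'))" using iso \<sigma> by auto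
      also have "\<dots> \<le> e (f (\<sigma> n)) y + e y (f (\<sigma> n'))" using Y.triangle fs y by blast
      also have "\<dots> < 1 / Suc n + 1 / Suc n'" using \<sigma>(2)[of n] \<sigma>(2)[of n'] Y.commute[of y] by (smt (verit))
      also have "\<dots> \<le> 1 / Suc N + 1/ Suc N" using inv \<open>N \<le> n\<close> \<open>N \<le> n'\<close> by (meson add_mono)
      also have "\<dots> < \<epsilon>" using N by (simp add: inverse_eq_divide)
      finally show "d (\<sigma> n) (\<sigma> n') < \<epsilon>" .
    qed
  qed
  then obtain x where "limitin M.mtopology \<sigma> x sequentially"
    using Mc unfolding M.mcomplete_def by blast
  then have x: "x \<in> M" and lim: "\<And>\<epsilon>. \<epsilon> > 0 \<Longrightarrow> eventually (\<lambda>n. \<sigma> n \<in> M \<and> d (\<sigma> n) x < \<epsilon>) sequentially"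
    unfolding M.limitin_metric by auto
  have "e y (f x) = 0"
  proof (rule ccontr)
    assume ne: "e y (f x) \<noteq> 0"
    define \<delta> where "\<delta> = e y (f x)"
    have \<delta>: "\<delta> > 0" using ne Y.nonneg unfolding \<delta>_def by (smt (verit))
    obtain N where N: "\<And>n. n \<ge> N \<Longrightarrow> d (\<sigma> n) x < \<delta>/2"
      using lim[of "\<delta>/2"] \<delta> unfolding eventually_sequentially by auto
    obtain K where K: "inverse (real (Suc K)) < \<delta>/2"
      using reals_Archimedean[of "\<delta>/2"] \<delta> by auto
    define n where "n = max N K"
    have "e y (f x) \<le> e y (f (\<sigma> n)) + e (f (\<sigma> n)) (f x)" using Y.triangle fs y x fM by blast
    also have "\<dots> < \<delta>/2 + \<delta>/2"
    proof -
      have "e y (f (\<sigma> n)) < 1 / Suc n" by (rule \<sigma>(2))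
      also have "\<dots> \<le> 1 / Suc K" using inv[of K n] by (simp add: n_def)
      finally have a: "e y (f (\<sigma> n)) < \<delta>/2" using K by (simp add: inverse_eq_divide)
      have b: "e (f (\<sigma> n)) (f x) < \<delta>/2" using N[of n] iso \<sigma>(1) x by (simp add: n_def)
      show ?thesis using a b by linarith
    qed
    finally show False unfolding \<delta>_def by simp
  qed
  then have "y = f x" using Y.zero y fM x by blast
  then show ?thesis using x by blast
qed

theorem corollary3p4:
  fixes d0 d1 :: "nat \<Rightarrow> nat \<Rightarrow> real"
    and X0 :: "'a set" and D0 :: "'a \<Rightarrow> 'a \<Rightarrow> real" and j0 :: "nat \<Rightarrow> 'a"
    and X1 :: "'b set" and D1 :: "'b \<Rightarrow> 'b \<Rightarrow> real" and j1 :: "nat \<Rightarrow> 'b"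
  assumes "Metric_space UNIV d0" and "Metric_space UNIV d1"
    and "is_completion UNIV d0 X0 D0 j0"
    and "is_completion UNIV d1 X1 D1 j1"
  shows "(Polish_metric_space X0 D0 \<and> Polish_metric_space X1 D1 \<and>
          (\<exists>f. isometric_iso X0 D0 X1 D1 f))
     \<longleftrightarrow> (\<exists>dstar :: nat \<Rightarrow> nat \<Rightarrow> real. Metric_space UNIV dstar \<and>
            (\<exists>\<iota>0 \<iota>1. dense_isometry UNIV d0 UNIV dstar \<iota>0 \<and>
                      dense_isometry UNIV d1 UNIV dstar \<iota>1))"
proof -
  note ddefs = is_completion_def dense_isometry_def isometry_map_def isometric_iso_def
  have M0: "Metric_space UNIV d0" and M1: "Metric_space UNIV d1" by fact+
  have X0: "Metric_space X0 D0" "Metric_space.mcomplete X0 D0" "range j0 \<subseteq> X0"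
    "\<And>a b. D0 (j0 a) (j0 b) = d0 a b" "Metric_space.mtopology X0 D0 closure_of range j0 = X0"
    using assms(3) unfolding ddefs by auto
  have X1: "Metric_space X1 D1" "Metric_space.mcomplete X1 D1" "range j1 \<subseteq> X1"
    "\<And>a b. D1 (j1 a) (j1 b) = d1 a b" "Metric_space.mtopology X1 D1 closure_of range j1 = X1"
    using assms(4) unfolding ddefs by auto
  interpret M0: Metric_space UNIV d0 by (rule M0)
  interpret M1: Metric_space UNIV d1 by (rule M1)
  interpret X0: Metric_space X0 D0 by (rule X0(1))
  interpret X1: Metric_space X1 D1 by (rule X1(1))
  have den0: "\<And>x r. x \<in> X0 \<Longrightarrow> r > 0 \<Longrightarrow> \<exists>n. D0 x (j0 n) < r"
    using X0(5) dense_char[OF X0(1) X0(3)] by blast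
  have den1: "\<And>x r. x \<in> X1 \<Longrightarrow> r > 0 \<Longrightarrow> \<exists>n. D1 x (j1 n) < r"
    using X1(5) dense_char[OF X1(1) X1(3)] by blast
  have inj0: "inj j0"
    by (metis X0(4) M0.zero UNIV_I X0.zero X0(3) range_subsetD injI)
  have inj1: "inj j1"
    by (metis X1(4) M1.zero UNIV_I X1.zero X1(3) range_subsetD injI)
  show ?thesis
  proof
    assume "Polish_metric_space X0 D0 \<and> Polish_metric_space X1 D1 \<and> (\<exists>f. isometric_iso X0 D0 X1 D1 f)"
    then obtain f where fX: "f ` X0 = X1" and fi: "\<And>x y. x \<in> X0 \<Longrightarrow> y \<in> X0 \<Longrightarrow> D1 (f x) (f y) = D0 x y"
      unfolding ddefs by auto
    have finj: "inj_on f X0"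
      by (metis fi X0.zero X1.zero fX image_eqI inj_onI)
    define C where "C = f ` range j0 \<union> range j1"
    have CX: "C \<subseteq> X1" using fX X0(3) X1(3) unfolding C_def by auto
    have "countable C" unfolding C_def by simp
    moreover have "infinite C"
    proof -
      have "infinite (range j0)" using inj0 by (simp add: finite_image_iff)
      then have "infinite (f ` range j0)"
        using finj X0(3) by (metis finite_image_iff inj_on_subset)
      then show ?thesis unfolding C_def by simp
    qed
    ultimately obtain e :: "'b \<Rightarrow> nat" where e: "bij_betw e C UNIV" by (rule countableE_infinite)
    define g where "g = inv_into C e"
    have gC: "\<And>n. g n \<in> C" unfolding g_def using e
      by (metis bij_betw_def inv_into_into UNIV_I)
    have eg: "\<And>n. e (g n) = n" unfolding g_def using e
      by (meson bij_betw_inv_into_right UNIV_I)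
    have ge: "\<And>c. c \<in> C \<Longrightarrow> g (e c) = c" unfolding g_def using e
      by (meson bij_betw_inv_into_left)
    have gX: "\<And>n. g n \<in> X1" using gC CX by auto
    define dstar where "dstar = (\<lambda>a b. D1 (g a) (g b))"
    have Ms: "Metric_space UNIV dstar"
    proof
      show "\<And>x y. 0 \<le> dstar x y" unfolding dstar_def by simp
      show "\<And>x y. dstar x y = dstar y x" unfolding dstar_def using X1.commute by simp
      show "\<And>x y. x \<in> UNIV \<Longrightarrow> y \<in> UNIV \<Longrightarrow> (dstar x y = 0) = (x = y)"
        unfolding dstar_def using gX X1.zero by (metis eg)
      show "\<And>x y z. x \<in> UNIV \<Longrightarrow> y \<in> UNIV \<Longrightarrow> z \<in> UNIV \<Longrightarrow> dstar x z \<le> dstar x y + dstar y z"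
        unfolding dstar_def using gX X1.triangle by blast
    qed
    define \<iota>0 where "\<iota>0 = (\<lambda>n. e (f (j0 n)))"
    define \<iota>1 where "\<iota>1 = (\<lambda>n. e (j1 n))"
    have g0: "\<And>n. g (\<iota>0 n) = f (j0 n)" unfolding \<iota>0_def by (rule ge) (auto simp: C_def)
    have g1: "\<And>n. g (\<iota>1 n) = j1 n" unfolding \<iota>1_def by (rule ge) (auto simp: C_def)
    have "dense_isometry UNIV d0 UNIV dstar \<iota>0"
      unfolding dense_isometry_def isometry_map_def
    proof (intro conjI)
      show "\<forall>x\<in>UNIV. \<forall>y\<in>UNIV. dstar (\<iota>0 x) (\<iota>0 y) = d0 x y"
        unfolding dstar_def g0 using fi X0(3) X0(4) by (metis UNIV_I range_subsetD)
      have "\<forall>x\<in>UNIV. \<forall>r>0. \<exists>y\<in>range \<iota>0. dstar x y < r"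
      proof (intro ballI allI impI)
        fix c :: nat and r :: real assume "r > 0"
        obtain x where x: "x \<in> X0" "g c = f x" using gX fX by (metis imageE)
        obtain n where "D0 x (j0 n) < r" using den0[OF x(1) \<open>r>0\<close>] by blast
        then have "dstar c (\<iota>0 n) < r" unfolding dstar_def g0 x(2) using fi x(1) X0(3) by (metis UNIV_I range_subsetD)
        then show "\<exists>y\<in>range \<iota>0. dstar c y < r" by blast
      qed
      then show "Metric_space.mtopology UNIV dstar closure_of \<iota>0 ` UNIV = UNIV"
        using dense_char[OF Ms, of "range \<iota>0"] by simp
    qed simp
    moreover have "dense_isometry UNIV d1 UNIV dstar \<iota>1"
      unfolding dense_isometry_def isometry_map_def
    proof (intro conjI)
      show "\<forall>x\<in>UNIV. \<forall>y\<in>UNIV. dstar (\<iota>1 x) (\<iota>1 y) = d1 x y"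
        unfolding dstar_def g1 using X1(4) by auto
      have "\<forall>x\<in>UNIV. \<forall>r>0. \<exists>y\<in>range \<iota>1. dstar x y < r"
      proof (intro ballI allI impI)
        fix c :: nat and r :: real assume "r > 0"
        obtain n where "D1 (g c) (j1 n) < r" using den1[OF gX \<open>r>0\<close>] by blast
        then have "dstar c (\<iota>1 n) < r" unfolding dstar_def g1 by auto
        then show "\<exists>y\<in>range \<iota>1. dstar c y < r" by blast
      qed
      then show "Metric_space.mtopology UNIV dstar closure_of \<iota>1 ` UNIV = UNIV"
        using dense_char[OF Ms, of "range \<iota>1"] by simp
    qed simp
    ultimately show "\<exists>dstar :: nat \<Rightarrow> nat \<Rightarrow> real. Metric_space UNIV dstar \<and>
            (\<exists>\<iota>0 \<iota>1. dense_isometry UNIV d0 UNIV dstar \<iota>0 \<and> dense_isometry UNIV d1 UNIV dstar \<iota>1)"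
      using Ms by blast
  next
    assume "\<exists>dstar :: nat \<Rightarrow> nat \<Rightarrow> real. Metric_space UNIV dstar \<and>
            (\<exists>\<iota>0 \<iota>1. dense_isometry UNIV d0 UNIV dstar \<iota>0 \<and> dense_isometry UNIV d1 UNIV dstar \<iota>1)"
    then obtain dstar :: "nat \<Rightarrow> nat \<Rightarrow> real" and \<iota>0 \<iota>1 where Ms: "Metric_space UNIV dstar"
      and di0: "dense_isometry UNIV d0 UNIV dstar \<iota>0" and di1: "dense_isometry UNIV d1 UNIV dstar \<iota>1"
      by blast
    interpret S: Metric_space UNIV dstar by (rule Ms)
    have i0: "\<And>a b. dstar (\<iota>0 a) (\<iota>0 b) = d0 a b" using di0 unfolding ddefs by auto
    have i1: "\<And>a b. dstar (\<iota>1 a) (\<iota>1 b) = d1 a b" using di1 unfolding ddefs by auto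
    have dS0: "\<And>x r. r > 0 \<Longrightarrow> \<exists>n. dstar x (\<iota>0 n) < r"
      using di0 dense_char[OF Ms, of "range \<iota>0"] unfolding ddefs by blast
    have dS1: "S.mtopology closure_of range \<iota>1 = UNIV"
      using di1 unfolding ddefs by blast
    have inji1: "inj \<iota>1" by (metis i1 M1.zero S.zero UNIV_I injI)
    have P0: "Polish_metric_space X0 D0"
      unfolding Polish_metric_space_def separable_space_def
      using X0 by (intro conjI exI[of _ "range j0"]) (auto simp: X0.topspace_mtopology)
    have P1: "Polish_metric_space X1 D1"
      unfolding Polish_metric_space_def separable_space_def
      using X1 by (intro conjI exI[of _ "range j1"]) (auto simp: X1.topspace_mtopology)
    obtain \<phi> where \<phi>X: "\<phi> ` UNIV \<subseteq> X1" and \<phi>i: "\<forall>x\<in>UNIV. \<forall>y\<in>UNIV. D1 (\<phi> x) (\<phi> y) = dstar x y"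
      and \<phi>1: "\<forall>x\<in>range \<iota>1. \<phi> x = j1 (inv \<iota>1 x)"
    proof (rule ext_isometry[OF Ms X1(1) X1(2), of "range \<iota>1" "\<lambda>x. j1 (inv \<iota>1 x)"])
      show "(\<lambda>x. j1 (inv \<iota>1 x)) ` range \<iota>1 \<subseteq> X1" using X1(3) by auto
      show "\<forall>x\<in>range \<iota>1. \<forall>y\<in>range \<iota>1. D1 (j1 (inv \<iota>1 x)) (j1 (inv \<iota>1 y)) = dstar x y"
        using inji1 X1(4) i1 by auto
    qed (use dS1 in auto)
    have \<phi>j: "\<And>n. \<phi> (\<iota>1 n) = j1 n" using \<phi>1 inji1 by auto
    obtain f where fX: "f ` X0 \<subseteq> X1" and fi: "\<forall>x\<in>X0. \<forall>y\<in>X0. D1 (f x) (f y) = D0 x y"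
      and f0: "\<forall>x\<in>range j0. f x = \<phi> (\<iota>0 (inv j0 x))"
    proof (rule ext_isometry[OF X0(1) X1(1) X1(2), of "range j0" "\<lambda>x. \<phi> (\<iota>0 (inv j0 x))"])
      show "(\<lambda>x. \<phi> (\<iota>0 (inv j0 x))) ` range j0 \<subseteq> X1" using \<phi>X by auto
      show "\<forall>x\<in>range j0. \<forall>y\<in>range j0. D1 (\<phi> (\<iota>0 (inv j0 x))) (\<phi> (\<iota>0 (inv j0 y))) = D0 x y"
        using inj0 X0(4) i0 \<phi>i by auto
    qed (use X0 in auto)
    have fj: "\<And>n. f (j0 n) = \<phi> (\<iota>0 n)" using f0 inj0 by auto
    have "X1 \<subseteq> f ` X0"
    proof
      fix y assume y: "y \<in> X1"
      show "y \<in> f ` X0"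
      proof (rule isometry_surj[OF X0(1) X0(2) X1(1) fX fi y], intro allI impI)
        fix r :: real assume r: "r > 0"
        obtain m where m: "D1 y (j1 m) < r/2" using den1[OF y, of "r/2"] r by auto
        obtain n where n: "dstar (\<iota>1 m) (\<iota>0 n) < r/2" using dS0[of "r/2"] r by auto
        have "D1 y (f (j0 n)) \<le> D1 y (j1 m) + D1 (j1 m) (f (j0 n))"
          using X1.triangle y X1(3) fX X0(3) by blast
        also have "D1 (j1 m) (f (j0 n)) = dstar (\<iota>1 m) (\<iota>0 n)"
          using \<phi>i by (simp add: fj flip: \<phi>j)
        finally have "D1 y (f (j0 n)) < r" using m n by linarith
        then show "\<exists>x\<in>X0. D1 y (f x) < r" using X0(3) by blast
      qed
    qed
    then have "isometric_iso X0 D0 X1 D1 f" unfolding ddefs using fX fi by auto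
    then show "Polish_metric_space X0 D0 \<and> Polish_metric_space X1 D1 \<and> (\<exists>f. isometric_iso X0 D0 X1 D1 f)"
      using P0 P1 by blast
  qed
qed

end
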